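(* Let $f:\mathbb{R}^2\to\mathbb{R}^2$ be a Topologically Anosov homeomorphism and $z_0\in\mathrm{Fix}(f)$. If $\Omega(f)\neq\{z_0\}$, then there exist $y_0\neq z_0$ and $z\in\mathbb{R}^2$ such that $y_0\in\omega(z)$.
   Context: A homeomorphism $f:\mathbb{R}^2\to\mathbb{R}^2$ is Topologically Anosov (TA) if: (i) there is a continuous strictly positive $\epsilon:\mathbb{R}^2\to\mathbb{R}$ such that for all $x\neq y$ there is $k\in\mathbb{Z}$ with $\|f^k(x)-f^k(y)\|>\epsilon(f^k(x))$; and (ii) for every continuous strictly positive $\epsilon$ there is a continuous strictly positive $\delta$ such that every $\delta$-pseudo-orbit is $\epsilon$-shadowed by an orbit. A $\delta$-pseudo-orbit is a sequence $(x_n)_{n\in\mathbb{Z}}$ with $\|f(x_n)-x_{n+1}\|<\delta(f(x_n))$; it is $\epsilon$-shadowed by the orbit of $x$ if $\|x_n-f^n(x)\|<\epsilon(x_n)$ for all $n$. $\Omega(f)$ is the nonwandering set; $\omega(z)$ is the $\omega$-limit set. *)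

theory Defs
  imports "HOL-Analysis.Analysis"
begin

type_synonym R2 = "real ^ 2"

definition iter :: "(R2 \<Rightarrow> R2) \<Rightarrow> int \<Rightarrow> R2 \<Rightarrow> R2" where
  "iter f k = (if 0 \<le> k then f ^^ nat k else inv f ^^ nat (- k))"

definition pos_cont :: "(R2 \<Rightarrow> real) \<Rightarrow> bool" where
  "pos_cont e \<longleftrightarrow> continuous_on UNIV e \<and> (\<forall>x. 0 < e x)"

definition is_homeo :: "(R2 \<Rightarrow> R2) \<Rightarrow> bool" where
  "is_homeo f \<longleftrightarrow> (\<exists>g. homeomorphism UNIV UNIV f g)"

definition expansive_TA :: "(R2 \<Rightarrow> R2) \<Rightarrow> bool" where
  "expansive_TA f \<longleftrightarrow> (\<exists>e. pos_cont e \<and>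
     (\<forall>x y. x \<noteq> y \<longrightarrow> (\<exists>k::int. norm (iter f k x - iter f k y) > e (iter f k x))))"

definition pseudo_orbit :: "(R2 \<Rightarrow> R2) \<Rightarrow> (R2 \<Rightarrow> real) \<Rightarrow> (int \<Rightarrow> R2) \<Rightarrow> bool" where
  "pseudo_orbit f d xs \<longleftrightarrow> (\<forall>n. norm (f (xs n) - xs (n + 1)) < d (f (xs n)))"

definition shadowed :: "(R2 \<Rightarrow> R2) \<Rightarrow> (R2 \<Rightarrow> real) \<Rightarrow> (int \<Rightarrow> R2) \<Rightarrow> R2 \<Rightarrow> bool" where
  "shadowed f e xs x \<longleftrightarrow> (\<forall>n. norm (xs n - iter f n x) < e (xs n))"

definition shadowing_TA :: "(R2 \<Rightarrow> R2) \<Rightarrow> bool" where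
  "shadowing_TA f \<longleftrightarrow> (\<forall>e. pos_cont e \<longrightarrow> (\<exists>d. pos_cont d \<and>
     (\<forall>xs. pseudo_orbit f d xs \<longrightarrow> (\<exists>x. shadowed f e xs x))))"

definition topologically_anosov :: "(R2 \<Rightarrow> R2) \<Rightarrow> bool" where
  "topologically_anosov f \<longleftrightarrow> is_homeo f \<and> expansive_TA f \<and> shadowing_TA f"

definition nonwandering :: "(R2 \<Rightarrow> R2) \<Rightarrow> R2 set" where
  "nonwandering f = {x. \<forall>U. open U \<and> x \<in> U \<longrightarrow> (\<exists>n::nat. n \<ge> 1 \<and> (f ^^ n) ` U \<inter> U \<noteq> {})}"

definition omega_limit :: "(R2 \<Rightarrow> R2) \<Rightarrow> R2 \<Rightarrow> R2 set" where
  "omega_limit f z = {y. \<exists>r::nat \<Rightarrow> nat. strict_mono r \<and> ((\<lambda>k. (f ^^ r k) z) \<longlongrightarrow> y) sequentially}"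

end

theory Submission
  imports Defs
begin

lemma pseudo_periodic:
  fixes f :: "R2 \<Rightarrow> R2" and d :: "R2 \<Rightarrow> real" and u :: R2 and n :: nat
  assumes "n \<ge> 1" and dpos: "\<forall>x. 0 < d x" and jump: "norm (f ((f ^^ (n - 1)) u) - u) < d ((f ^^ n) u)"
  shows "pseudo_orbit f d (\<lambda>m. (f ^^ nat (m mod int n)) u)"
  unfolding pseudo_orbit_def
proof
  fix m :: int
  have n0: "int n > 0" using assms(1) by simp
  show "norm (f ((f ^^ nat (m mod int n)) u) - (f ^^ nat ((m + 1) mod int n)) u)
        < d (f ((f ^^ nat (m mod int n)) u))"
  proof (cases "m mod int n + 1 < int n")
    case True
    have "(m + 1) mod int n = (m mod int n + 1) mod int n" by (simp add: mod_add_left_eq)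
    also have "\<dots> = m mod int n + 1"
      using True n0 pos_mod_sign[of "int n" m] by (simp add: mod_pos_pos_trivial)
    finally have "(m + 1) mod int n = m mod int n + 1" .
    then have "nat ((m + 1) mod int n) = Suc (nat (m mod int n))"
      using n0 by (simp add: nat_add_distrib)
    then show ?thesis using dpos by simp
  next
    case False
    then have e: "m mod int n = int n - 1" using n0
      using pos_mod_bound[of "int n" m] by linarith
    have "(m + 1) mod int n = (m mod int n + 1) mod int n" by (simp add: mod_add_left_eq)
    then have "(m + 1) mod int n = 0" using e by simp
    moreover have "nat (m mod int n) = n - 1" using e assms(1) by simp
    moreover have "f ((f ^^ (n - 1)) u) = (f ^^ n) u" using assms(1)
      by (metis Suc_diff_le diff_Suc_1 funpow.simps(2) o_apply)
    ultimately show ?thesis using jump by simp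
  qed
qed

theorem mainTheorem14:
  fixes f :: "R2 \<Rightarrow> R2" and z0 :: R2
  assumes "topologically_anosov f"
    and "f z0 = z0"
    and "nonwandering f \<noteq> {z0}"
  shows "\<exists>y0 z. y0 \<noteq> z0 \<and> y0 \<in> omega_limit f z"
proof -
  have "z0 \<in> nonwandering f"
    unfolding nonwandering_def
  proof (intro CollectI allI impI)
    fix U assume "open U \<and> z0 \<in> U"
    then have "z0 \<in> (f ^^ 1) ` U \<inter> U" proof -
      have "f z0 \<in> f ` U" using \<open>open U \<and> z0 \<in> U\<close> by blast
      then show ?thesis using assms(2) \<open>open U \<and> z0 \<in> U\<close> by simp
    qed
    then show "\<exists>n::nat. n \<ge> 1 \<and> (f ^^ n) ` U \<inter> U \<noteq> {}" by blast
  qed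
  then obtain x where xnw: "x \<in> nonwandering f" and xz: "x \<noteq> z0" using assms(3) by blast
  define r where "r = dist x z0 / 3"
  have r0: "r > 0" using xz by (simp add: r_def)
  have shad: "shadowing_TA f" using assms(1) by (simp add: topologically_anosov_def)
  have pc: "pos_cont (\<lambda>_. r)" using r0 by (simp add: pos_cont_def)
  then obtain d where dpc: "pos_cont d"
    and dsh: "\<And>xs. pseudo_orbit f d xs \<Longrightarrow> \<exists>w. shadowed f (\<lambda>_. r) xs w"
    using shad unfolding shadowing_TA_def by blast
  have dpos: "\<forall>y. 0 < d y" and dcont: "continuous_on UNIV d" using dpc by (auto simp: pos_cont_def)
  have "isCont d x" using dcont by (simp add: continuous_on_eq_continuous_at)
  then obtain s where s0: "s > 0" and sd: "\<And>y. dist y x < s \<Longrightarrow> dist (d y) (d x) < d x / 2"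
  proof -
    have "d x / 2 > 0" using dpos by simp
    then obtain s where s0: "s > 0" and h: "\<forall>y. y \<noteq> x \<and> dist y x < s \<longrightarrow> dist (d y) (d x) < d x / 2"
      using \<open>isCont d x\<close> unfolding isCont_def LIM_def by blast
    have "dist (d y) (d x) < d x / 2" if "dist y x < s" for y
      using h that dpos by (cases "y = x") auto
    then show ?thesis using that s0 by blast
  qed
  define \<rho> where "\<rho> = min s (min (d x / 4) r)"
  have rho0: "\<rho> > 0" using s0 r0 dpos by (simp add: \<rho>_def)
  have "open (ball x \<rho>) \<and> x \<in> ball x \<rho>" using rho0 by simp
  then obtain n :: nat where n1: "n \<ge> 1" and ne: "(f ^^ n) ` ball x \<rho> \<inter> ball x \<rho> \<noteq> {}"
    using xnw unfolding nonwandering_def by blast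
  then obtain u where uU: "u \<in> ball x \<rho>" and fuU: "(f ^^ n) u \<in> ball x \<rho>" by blast
  have "dist ((f ^^ n) u) x < s" using fuU by (simp add: \<rho>_def dist_commute)
  then have "\<bar>d ((f ^^ n) u) - d x\<bar> < d x / 2" using sd[of "(f ^^ n) u"] by (simp add: dist_real_def)
  then have dfu: "d ((f ^^ n) u) > d x / 2" by linarith
  have "norm ((f ^^ n) u - u) \<le> dist ((f ^^ n) u) x + dist x u"
    by (metis dist_norm dist_triangle)
  also have "\<dots> < 2 * \<rho>" using uU fuU by (simp add: dist_commute)
  also have "\<dots> \<le> d x / 2" by (simp add: \<rho>_def)
  finally have jump0: "norm ((f ^^ n) u - u) < d ((f ^^ n) u)" using dfu by simp
  have "f ((f ^^ (n - 1)) u) = (f ^^ n) u" using n1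
    by (metis Suc_diff_le diff_Suc_1 funpow.simps(2) o_apply)
  then have jump: "norm (f ((f ^^ (n - 1)) u) - u) < d ((f ^^ n) u)" using jump0 by simp
  have "pseudo_orbit f d (\<lambda>m. (f ^^ nat (m mod int n)) u)"
    using pseudo_periodic[OF n1 dpos jump] .
  then obtain w where w: "shadowed f (\<lambda>_. r) (\<lambda>m. (f ^^ nat (m mod int n)) u) w"
    using dsh by blast
  have inb: "(f ^^ (k * n)) w \<in> cball u r" for k :: nat
  proof -
    have "norm ((f ^^ nat (int (k * n) mod int n)) u - iter f (int (k * n)) w) < r"
      using w unfolding shadowed_def by blast
    moreover have "int (k * n) mod int n = 0" by simp
    moreover have "iter f (int (k * n)) w = (f ^^ (k * n)) w" by (simp add: iter_def nat_mult_distrib)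
    ultimately have "norm (u - (f ^^ (k * n)) w) < r" by simp
    then show ?thesis by (simp add: dist_norm)
  qed
  obtain l rr where lin: "l \<in> cball u r" and rrm: "strict_mono rr"
    and lim: "((\<lambda>k. (f ^^ (k * n)) w) \<circ> rr) \<longlonglongrightarrow> l"
    using seq_compactE[OF compact_imp_seq_compact[OF compact_cball[of u r]], of "\<lambda>k. (f ^^ (k * n)) w"] inb by blast
  have sm: "strict_mono (\<lambda>k. rr k * n)"
    using rrm n1 unfolding strict_mono_def by simp
  have "l \<in> omega_limit f w"
    unfolding omega_limit_def using sm lim by (auto simp: o_def)
  moreover have "l \<noteq> z0"
  proof
    assume "l = z0"
    then have "dist u z0 \<le> r" using lin by (simp add: dist_commute)
    moreover have "dist x u < r" using uU by (simp add: \<rho>_def)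
    ultimately have "dist x z0 < 2 * r" using dist_triangle[of x z0 u] by linarith
    then show False using r0 by (simp add: r_def)
  qed
  ultimately show ?thesis by blast
qed

end
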